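(* Let $f$ be an L-additive arithmetic function whose associated completely multiplicative function $h_f$ is nonzero-valued, and let $\Lambda_f$ be its generalized von Mangoldt function. Then for every positive integer $n$, $$(\tau\ast\Lambda_f)(n)=\frac{f(n)\tau(n)}{2h_f(n)}.$$
   Context: An arithmetic function $f:\mathbb{N}\to\mathbb{C}$ is L-additive if there is a completely multiplicative function $h_f$ such that $f(mn)=f(m)h_f(n)+f(n)h_f(m)$ for all positive integers $m,n$; such an $h_f$ is fixed. $\Lambda_f(n)=\frac{f(p)}{h_f(p)}$ if $n=p^k$ for some prime $p$ and integer $k\geq1$, and $0$ otherwise. $\tau(n)$ is the number of positive divisors of $n$, and $\ast$ is Dirichlet convolution. *)

theory Defs
  imports Complex_Main "HOL-Number_Theory.Number_Theory"
begin

definition completely_multiplicative :: "(nat \<Rightarrow> complex) \<Rightarrow> bool" where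
  "completely_multiplicative h \<longleftrightarrow>
     h 1 = 1 \<and> (\<forall>m n. m > 0 \<longrightarrow> n > 0 \<longrightarrow> h (m * n) = h m * h n)"

definition L_additive_wrt :: "(nat \<Rightarrow> complex) \<Rightarrow> (nat \<Rightarrow> complex) \<Rightarrow> bool" where
  "L_additive_wrt f h \<longleftrightarrow> completely_multiplicative h \<and>
     (\<forall>m n. m > 0 \<longrightarrow> n > 0 \<longrightarrow> f (m * n) = f m * h n + f n * h m)"

definition gen_mangoldt :: "(nat \<Rightarrow> complex) \<Rightarrow> (nat \<Rightarrow> complex) \<Rightarrow> nat \<Rightarrow> complex" where
  "gen_mangoldt f h n =
     (if primepow n then f (aprimedivisor n) / h (aprimedivisor n) else 0)"

definition num_divisors :: "nat \<Rightarrow> nat" where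
  "num_divisors n = card {d. d dvd n}"

definition dirichlet_conv :: "(nat \<Rightarrow> complex) \<Rightarrow> (nat \<Rightarrow> complex) \<Rightarrow> nat \<Rightarrow> complex" where
  "dirichlet_conv a b n = (\<Sum>d | d dvd n. a d * b (n div d))"

end

theory Submission
  imports Defs
begin

lemma divisor_swap:
  fixes F :: "nat \<Rightarrow> complex"
  assumes "n > 0"
  shows "(\<Sum>d | d dvd n. F (n div d)) = (\<Sum>d | d dvd n. F d)"
  by (rule sum.reindex_bij_witness[where i="\<lambda>d. n div d" and j="\<lambda>d. n div d"])
     (use assms in \<open>auto simp: div_div_eq_right dvd_div_eq_mult elim!: dvdE\<close>)

lemma sum_primepow_eq:
  fixes F :: "nat \<Rightarrow> complex"
  assumes "n > 0"
  shows "(\<Sum>d | d dvd n. (if primepow d then F (aprimedivisor d) else 0))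
         = (\<Sum>p\<in>#prime_factorization n. F p)"
proof -
  have "(\<Sum>d | d dvd n. (if primepow d then F (aprimedivisor d) else 0))
        = (\<Sum>q\<in>primepow_factors n. F (aprimedivisor q))"
    using assms by (intro sum.mono_neutral_cong_right) (auto simp: primepow_factors_def)
  also have "\<dots> = (\<Sum>p\<in>#prime_factorization n. F p)"
    using assms by (intro sum_prime_factorization_conv_sum_primepow_factors) auto
  finally show ?thesis .
qed

lemma pm_pos: "(\<forall>x\<in>#M. x > 0) \<Longrightarrow> prod_mset M > (0::nat)"
  by (induction M) auto

theorem corollary2p1:
  fixes f h :: "nat \<Rightarrow> complex" and n :: nat
  assumes "L_additive_wrt f h"
    and "\<forall>m>0. h m \<noteq> 0"
    and "n > 0"
  shows "dirichlet_conv (\<lambda>d. of_nat (num_divisors d)) (gen_mangoldt f h) n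
           = f n * of_nat (num_divisors n) / (2 * h n)"
proof -
  define g where "g = (\<lambda>m. f m / h m)"
  have h1: "h 1 = 1" and hm: "\<And>a b. a > 0 \<Longrightarrow> b > 0 \<Longrightarrow> h (a*b) = h a * h b"
    and fm: "\<And>a b. a > 0 \<Longrightarrow> b > 0 \<Longrightarrow> f (a*b) = f a * h b + f b * h a"
    using assms(1) unfolding L_additive_wrt_def completely_multiplicative_def by auto
  have f1: "f 1 = 0" using fm[of 1 1] h1 by simp
  have g1: "g 1 = 0" using f1 by (simp add: g_def)
  have gadd: "g (a*b) = g a + g b" if "a > 0" "b > 0" for a b
    using that fm[OF that] hm[OF that] assms(2) by (simp add: g_def field_simps)
  have gmset: "(\<forall>x\<in>#M. x > 0) \<Longrightarrow> g (prod_mset M) = (\<Sum>x\<in>#M. g x)" for M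
  proof (induction M)
    case empty then show ?case using g1 by simp
  next
    case (add x M)
    have "prod_mset M > 0" using add.prems by (intro pm_pos) auto
    then show ?case using add by (simp add: gadd)
  qed
  have A: "(\<Sum>d | d dvd m. gen_mangoldt f h d) = g m" if "m > 0" for m
  proof -
    have "(\<Sum>d | d dvd m. gen_mangoldt f h d) = (\<Sum>p\<in>#prime_factorization m. g p)"
      unfolding gen_mangoldt_def g_def using that by (rule sum_primepow_eq)
    also have "\<dots> = g (prod_mset (prime_factorization m))"
      by (subst gmset) (auto simp: prime_gt_0_nat in_prime_factors_iff)
    also have "prod_mset (prime_factorization m) = m"
      using that by (simp add: prod_mset_prime_factorization_nat)
    finally show ?thesis .
  qed
  define D where "D = {d. d dvd n}"
  have finD: "finite D" using assms(3) by (simp add: D_def)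
  have "dirichlet_conv (\<lambda>d. of_nat (num_divisors d)) (gen_mangoldt f h) n
     = (\<Sum>d\<in>D. \<Sum>e\<in>{e\<in>D. e dvd d}. gen_mangoldt f h (n div d))"
    unfolding dirichlet_conv_def D_def num_divisors_def
  proof (intro sum.cong refl)
    fix d assume "d \<in> {d. d dvd n}"
    then have dn: "d dvd n" by simp
    have "{e. e dvd d} = {e \<in> {d. d dvd n}. e dvd d}"
    proof (intro equalityI subsetI)
      fix e assume "e \<in> {e. e dvd d}"
      then show "e \<in> {e \<in> {d. d dvd n}. e dvd d}" using dn dvd_trans[of e d n] by simp
    qed simp
    then show "of_nat (card {e. e dvd d}) * gen_mangoldt f h (n div d)
      = (\<Sum>e\<in>{e \<in> {d. d dvd n}. e dvd d}. gen_mangoldt f h (n div d))" by (simp only: sum_constant mult_of_nat_commute)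
  qed
  also have "\<dots> = (\<Sum>e\<in>D. \<Sum>d\<in>{d\<in>D. e dvd d}. gen_mangoldt f h (n div d))"
    by (rule sum.swap_restrict[OF finD finD])
  also have "\<dots> = (\<Sum>e\<in>D. g (n div e))"
  proof (intro sum.cong refl)
    fix e assume e: "e \<in> D"
    then have epos: "e > 0" and en: "e dvd n" using assms(3) by (auto simp: D_def intro: Nat.gr0I)
    have "(\<Sum>d\<in>{d\<in>D. e dvd d}. gen_mangoldt f h (n div d))
       = (\<Sum>c | c dvd (n div e). gen_mangoldt f h ((n div e) div c))"
      by (rule sum.reindex_bij_witness[where i="\<lambda>c. e * c" and j="\<lambda>d. d div e"])
         (use epos en in \<open>auto simp: D_def div_div_eq_right elim!: dvdE\<close>)
    also have "\<dots> = (\<Sum>c | c dvd (n div e). gen_mangoldt f h c)"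
      using en epos assms(3) by (intro divisor_swap) (auto elim!: dvdE)
    also have "\<dots> = g (n div e)"
      using en epos assms(3) by (intro A) (auto elim!: dvdE)
    finally show "(\<Sum>d\<in>{d\<in>D. e dvd d}. gen_mangoldt f h (n div d)) = g (n div e)" .
  qed
  finally have S: "dirichlet_conv (\<lambda>d. of_nat (num_divisors d)) (gen_mangoldt f h) n
     = (\<Sum>e\<in>D. g (n div e))" .
  have S2: "(\<Sum>e\<in>D. g (n div e)) = (\<Sum>e\<in>D. g e)"
    unfolding D_def using assms(3) by (rule divisor_swap)
  have "2 * (\<Sum>e\<in>D. g (n div e)) = (\<Sum>e\<in>D. g e + g (n div e))"
    using S2 by (simp add: sum.distrib)
  also have "\<dots> = (\<Sum>e\<in>D. g n)"
  proof (intro sum.cong refl)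
    fix e assume "e \<in> D"
    then obtain k where k: "n = e * k" by (auto simp: D_def elim!: dvdE)
    then have "e > 0" "k > 0" using assms(3) by auto
    then show "g e + g (n div e) = g n" using k gadd by simp
  qed
  also have "\<dots> = of_nat (num_divisors n) * g n"
    by (simp add: num_divisors_def D_def)
  finally have T: "2 * (\<Sum>e\<in>D. g (n div e)) = of_nat (num_divisors n) * g n" .
  then have "(\<Sum>e\<in>D. g (n div e)) = of_nat (num_divisors n) * g n / 2"
    by (simp add: eq_divide_eq mult.commute)
  moreover have "h n \<noteq> 0" using assms(2,3) by auto
  ultimately show ?thesis using S by (simp add: g_def field_simps)
qed

end
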